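(* Let $\mathcal S=[-0.75,1]$ with the usual metric, $M=2$ target locations $S^*_1=0.5$, $S^*_2=-0.5$, $\chi(s)=s$, $f(s)=s^2$, and let every response (training or target) at location $s$ be $f(s)+\epsilon$ with $\epsilon\sim\mathcal N(0,1)$ independent across observations. Consider the Gaussian linear model without intercept, i.e. the GLM with $\kappa(\theta)=\theta^2/2$, covariate $x=s$ and scalar parameter $\beta$. Then: (i) the variance function is constant equal to $1$, the fourth central moment function is constant equal to $3$, and the target objective $\beta\mapsto\sum_{m=1}^2\mathbb E[\log h(Y^*_m;S^*_m\beta)]$ is strictly concave with unique maximizer $\beta^*=0$; (ii) if the training locations $S_1,S_2,\dots$ are i.i.d. uniform on $[-0.75,1]$, then almost surely they satisfy infill asymptotics with respect to $\{0.5,-0.5\}$; (iii) nevertheless, the ordinary least-squares estimate $\big(\sum_{n\le N}S_n^2\big)^{-1}\sum_{n\le N}S_nY_n$ computed from the training data does not converge in probability to $0$, and the one-nearest-neighbor estimator $\tau(\Psi^{N,1}Y_{1:N})$ does not converge in probability to $0$.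
   Context: $h(y;\theta)=c(y)\exp(\theta y-\kappa(\theta))$ denotes the exponential-family density. Infill asymptotics: for every target $S^*_m$ and every open set $U\ni S^*_m$, infinitely many $n$ have $S_n\in U$. For $A\in\mathbb R^M$, $\tau(A)$ is the maximizer of $\beta\mapsto\sum_m S^*_m\beta A_m-\kappa(S^*_m\beta)$. $\Psi^{N,1}\in\mathbb R^{M\times N}$ has $\Psi^{N,1}_{mn}=1$ if $S_n$ is the closest point of $\{S_1,\dots,S_N\}$ to $S^*_m$ and $0$ otherwise. *)

theory Defs
  imports "HOL-Probability.Probability"
begin

definition loc_space :: "real set" where
  "loc_space = {-0.75..1}"

definition Sstar :: "nat \<Rightarrow> real" where
  "Sstar m = (if m = 1 then 0.5 else if m = 2 then -0.5 else 0)"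

definition chi :: "real \<Rightarrow> real" where
  "chi s = s"

definition fmean :: "real \<Rightarrow> real" where
  "fmean s = s ^ 2"

definition resp_density :: "real \<Rightarrow> real \<Rightarrow> real" where
  "resp_density s y = normal_density (fmean s) 1 y"

definition kappa :: "real \<Rightarrow> real" where
  "kappa \<theta> = \<theta> ^ 2 / 2"

definition cbase :: "real \<Rightarrow> real" where
  "cbase y = exp (- (y ^ 2) / 2) / sqrt (2 * pi)"

definition hdens :: "real \<Rightarrow> real \<Rightarrow> real" where
  "hdens y \<theta> = cbase y * exp (\<theta> * y - kappa \<theta>)"

definition resp_mean :: "real \<Rightarrow> real" where
  "resp_mean s = (\<integral>y. y * resp_density s y \<partial>lborel)"

definition var_fun :: "real \<Rightarrow> real" where
  "var_fun s = (\<integral>y. (y - resp_mean s) ^ 2 * resp_density s y \<partial>lborel)"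

definition fourth_fun :: "real \<Rightarrow> real" where
  "fourth_fun s = (\<integral>y. (y - resp_mean s) ^ 4 * resp_density s y \<partial>lborel)"

definition target_obj :: "real \<Rightarrow> real" where
  "target_obj \<beta> = (\<Sum>m\<in>{1,2::nat}.
      \<integral>y. ln (hdens y (chi (Sstar m) * \<beta>)) * resp_density (Sstar m) y \<partial>lborel)"

definition strictly_concave_on :: "real set \<Rightarrow> (real \<Rightarrow> real) \<Rightarrow> bool" where
  "strictly_concave_on S g \<longleftrightarrow> convex S \<and>
     (\<forall>x\<in>S. \<forall>y\<in>S. x \<noteq> y \<longrightarrow> (\<forall>u::real. 0 < u \<and> u < 1 \<longrightarrow>
        g (u * x + (1 - u) * y) > u * g x + (1 - u) * g y))"

definition infill :: "(nat \<Rightarrow> real) \<Rightarrow> real set \<Rightarrow> bool" where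
  "infill x T \<longleftrightarrow> (\<forall>t\<in>T. \<forall>U. open U \<and> t \<in> U \<longrightarrow> infinite {n. x n \<in> U})"

definition conv_in_prob :: "'a measure \<Rightarrow> (nat \<Rightarrow> 'a \<Rightarrow> real) \<Rightarrow> real \<Rightarrow> bool" where
  "conv_in_prob M X c \<longleftrightarrow>
     (\<forall>e>0. (\<lambda>N. measure M {\<omega>\<in>space M. \<bar>X N \<omega> - c\<bar> > e}) \<longlonglongrightarrow> 0)"

definition tau :: "(nat \<Rightarrow> real) \<Rightarrow> real" where
  "tau A = (THE \<beta>. \<forall>\<beta>'.
      (\<Sum>m\<in>{1,2::nat}. chi (Sstar m) * \<beta>' * A m - kappa (chi (Sstar m) * \<beta>'))
    \<le> (\<Sum>m\<in>{1,2::nat}. chi (Sstar m) * \<beta> * A m - kappa (chi (Sstar m) * \<beta>)))"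

text \<open>One-nearest-neighbour matrix Psi^{N,1} for training locations x_0,...,x_{N-1}
  (0-based indexing of the training sample): entry (m,n) is 1 iff x_n is a closest
  point of {x_0,...,x_{N-1}} to S*_m.\<close>
definition Psi1 :: "nat \<Rightarrow> (nat \<Rightarrow> real) \<Rightarrow> nat \<Rightarrow> nat \<Rightarrow> real" where
  "Psi1 N x m n = (if n < N \<and> (\<forall>k<N. dist (x n) (Sstar m) \<le> dist (x k) (Sstar m)) then 1 else 0)"

definition Psi1_apply :: "nat \<Rightarrow> (nat \<Rightarrow> real) \<Rightarrow> (nat \<Rightarrow> real) \<Rightarrow> nat \<Rightarrow> real" where
  "Psi1_apply N x y m = (\<Sum>n<N. Psi1 N x m n * y n)"

definition ols :: "nat \<Rightarrow> (nat \<Rightarrow> real) \<Rightarrow> (nat \<Rightarrow> real) \<Rightarrow> real" where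
  "ols N x y = inverse (\<Sum>n<N. (chi (x n))^2) * (\<Sum>n<N. chi (x n) * y n)"

end

theory Submission
  imports Defs
begin

lemma resp_mean_eq: "resp_mean s = s^2"
  unfolding resp_mean_def resp_density_def fmean_def
  using integral_normal_moment_nz_1[of 1 "s^2"] by (simp add: mult.commute)

lemma var_fun_eq: "var_fun s = 1"
  unfolding var_fun_def resp_mean_eq resp_density_def fmean_def
  using integral_normal_moment_even[of 1 "s^2" 1] by (simp add: mult.commute)

lemma fourth_fun_eq: "fourth_fun s = 3"
  unfolding fourth_fun_def resp_mean_eq resp_density_def fmean_def
  using integral_normal_moment_even[of 1 "s^2" 2] by (simp add: mult.commute fact_numeral)

lemma int_quad:
  "(\<integral>y. (a*(y-\<mu>)^2 + b*(y-\<mu>) + c) * normal_density \<mu> 1 y \<partial>lborel) = a + (c::real)"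
proof -
  have h2: "has_bochner_integral lborel (\<lambda>x. normal_density \<mu> 1 x * (x - \<mu>)^2) 1"
    using normal_moment_even[of 1 \<mu> 1] by simp
  have h1: "has_bochner_integral lborel (\<lambda>x. normal_density \<mu> 1 x * (x - \<mu>)) 0"
    using normal_moment_odd[of 1 \<mu> 0] by simp
  have h0: "has_bochner_integral lborel (\<lambda>x. normal_density \<mu> 1 x) 1"
    using normal_moment_even[of 1 \<mu> 0] by simp
  have "has_bochner_integral lborel (\<lambda>x. a * (normal_density \<mu> 1 x * (x - \<mu>)^2)
     + b * (normal_density \<mu> 1 x * (x - \<mu>)) + c * normal_density \<mu> 1 x) (a * 1 + b * 0 + c * 1)"
    by (intro has_bochner_integral_add has_bochner_integral_mult_right h0 h1 h2)
  then have "has_bochner_integral lborel (\<lambda>y. (a*(y-\<mu>)^2 + b*(y-\<mu>) + c) * normal_density \<mu> 1 y) (a + c)"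
    by (simp add: algebra_simps)
  then show ?thesis by (rule has_bochner_integral_integral_eq)
qed

lemma ln_hdens: "ln (hdens y t) = - (y^2)/2 - ln (sqrt (2*pi)) + t*y - t^2/2"
proof -
  have "cbase y > 0" unfolding cbase_def by simp
  then show ?thesis unfolding hdens_def kappa_def cbase_def
    by (simp add: ln_mult ln_div)
qed

lemma target_term:
  "(\<integral>y. ln (hdens y t) * normal_density \<mu> 1 y \<partial>lborel)
     = -1/2 - \<mu>^2/2 - ln (sqrt (2*pi)) + t*\<mu> - t^2/2"
proof -
  have "(\<lambda>y. ln (hdens y t) * normal_density \<mu> 1 y) =
    (\<lambda>y. ((-1/2)*(y-\<mu>)^2 + (t - \<mu>)*(y-\<mu>) + (- (\<mu>^2)/2 - ln (sqrt (2*pi)) + t*\<mu> - t^2/2)) * normal_density \<mu> 1 y)"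
    unfolding ln_hdens by (rule ext) (simp add: power2_eq_square algebra_simps)
  then have "(\<integral>y. ln (hdens y t) * normal_density \<mu> 1 y \<partial>lborel) = -1/2 + (- (\<mu>^2)/2 - ln (sqrt (2*pi)) + t*\<mu> - t^2/2)"
    by (simp only: int_quad)
  then show ?thesis by simp
qed

lemma target_obj_eq: "target_obj b = -17/16 - 2 * ln (sqrt (2*pi)) - b^2/4"
  unfolding target_obj_def resp_density_def
  by (simp add: target_term Sstar_def chi_def fmean_def power2_eq_square algebra_simps)

lemma concave_part: "strictly_concave_on UNIV target_obj"
  unfolding strictly_concave_on_def target_obj_eq
proof (intro conjI ballI allI impI)
  fix x y u :: real assume "x \<noteq> y" "0 < u \<and> u < 1"
  then have "0 < u * (1-u) * (x-y)^2" by simp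
  moreover have "u * x^2 + (1-u) * y^2 - (u * x + (1 - u) * y)^2 = u * (1-u) * (x-y)^2"
    by (simp add: power2_eq_square algebra_simps)
  ultimately have "(u * x + (1 - u) * y)^2 < u * x^2 + (1-u) * y^2" by linarith
  then show "u * (-17/16 - 2 * ln (sqrt (2*pi)) - x^2/4) + (1 - u) * (-17/16 - 2 * ln (sqrt (2*pi)) - y^2/4)
     < -17/16 - 2 * ln (sqrt (2*pi)) - (u * x + (1 - u) * y)^2/4"
  proof -
    fix C :: real
    have e: "u * (C - x^2/4) + (1 - u) * (C - y^2/4) = C - (u * x^2 + (1-u) * y^2)/4"
      by (simp add: field_simps)
    show "u * (C - x^2/4) + (1 - u) * (C - y^2/4) < C - (u * x + (1 - u) * y)^2/4"
      unfolding e using \<open>(u * x + (1 - u) * y)^2 < u * x^2 + (1-u) * y^2\<close> by simp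
  qed
qed simp

definition XX :: "(nat \<Rightarrow> 'a \<Rightarrow> real) \<Rightarrow> (nat \<Rightarrow> 'a \<Rightarrow> real) \<Rightarrow> nat + nat \<Rightarrow> 'a \<Rightarrow> real" where
  "XX S eps i = (case i of Inl n \<Rightarrow> S n | Inr n \<Rightarrow> eps n)"

lemma loc_borel[measurable]: "loc_space \<in> sets borel"
  unfolding loc_space_def by simp

lemma loc_meas: "measure lborel loc_space = 7/4"
  unfolding loc_space_def by simp

locale exsetup = prob_space M for M :: "'a measure" +
  fixes S eps :: "nat \<Rightarrow> 'a \<Rightarrow> real"
  assumes S_distr: "\<And>n. distributed M lborel (S n)
                    (\<lambda>x. indicator loc_space x / measure lborel loc_space)"
    and eps_distr: "\<And>n. distributed M lborel (eps n) std_normal_density"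
    and indep0: "indep_vars (\<lambda>_. borel)
                  (\<lambda>i. case i of Inl n \<Rightarrow> S n | Inr n \<Rightarrow> eps n) UNIV"
begin

abbreviation "X \<equiv> XX S eps"

lemma indep: "indep_vars (\<lambda>_. borel) X UNIV"
  using indep0 unfolding XX_def[abs_def] .

lemma X_meas: "X k \<in> borel_measurable M"
  using indep unfolding indep_vars_def by auto

lemma S_meas[measurable]: "S n \<in> borel_measurable M"
  using X_meas[of "Inl n"] by (simp add: XX_def)

lemma eps_meas[measurable]: "eps n \<in> borel_measurable M"
  using X_meas[of "Inr n"] by (simp add: XX_def)

lemma emeasure_S:
  assumes A: "A \<in> sets borel"
  shows "emeasure M {\<omega>\<in>space M. S n \<omega> \<in> A} = ennreal (4/7) * emeasure lborel (A \<inter> loc_space)"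
proof -
  have "emeasure M {\<omega>\<in>space M. S n \<omega> \<in> A} = emeasure (distr M lborel (S n)) A"
    using A by (subst emeasure_distr) (auto simp: vimage_def Int_def conj_commute)
  also have "\<dots> = emeasure (density lborel (\<lambda>x. ennreal (indicator loc_space x / measure lborel loc_space))) A"
    using S_distr[of n] unfolding distributed_def by simp
  also have "\<dots> = (\<integral>\<^sup>+x. ennreal (indicator loc_space x / measure lborel loc_space) * indicator A x \<partial>lborel)"
    using A S_distr[of n] unfolding distributed_def by (subst emeasure_density) auto
  also have "\<dots> = (\<integral>\<^sup>+x. ennreal (4/7) * indicator (A \<inter> loc_space) x \<partial>lborel)"
    by (intro nn_integral_cong) (auto simp: loc_meas indicator_def)
  also have "\<dots> = ennreal (4/7) * emeasure lborel (A \<inter> loc_space)"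
    using A by (subst nn_integral_cmult_indicator) (auto simp: loc_space_def)
  finally show ?thesis .
qed

lemma prob_S:
  assumes A: "A \<in> sets borel"
  shows "prob {\<omega>\<in>space M. S n \<omega> \<in> A} = 4/7 * measure lborel (A \<inter> loc_space)"
proof -
  have fin: "emeasure lborel (A \<inter> loc_space) < \<infinity>"
  proof -
    have "emeasure lborel (A \<inter> loc_space) \<le> emeasure lborel loc_space"
      by (rule emeasure_mono) auto
    also have "\<dots> < \<infinity>" by (simp add: loc_space_def)
    finally show ?thesis .
  qed
  have e: "emeasure lborel (A \<inter> loc_space) = ennreal (measure lborel (A \<inter> loc_space))"
    using fin by (simp add: emeasure_eq_ennreal_measure)
  have "prob {\<omega>\<in>space M. S n \<omega> \<in> A} = enn2real (emeasure M {\<omega>\<in>space M. S n \<omega> \<in> A})"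
    by (simp add: measure_def)
  also have "\<dots> = enn2real (ennreal (4/7 * measure lborel (A \<inter> loc_space)))"
    unfolding emeasure_S[OF A] e by (subst ennreal_mult) auto
  also have "\<dots> = 4/7 * measure lborel (A \<inter> loc_space)"
    by simp
  finally show ?thesis .
qed

lemma AE_S: "AE \<omega> in M. S n \<omega> \<in> loc_space"
proof -
  have "emeasure M {\<omega>\<in>space M. S n \<omega> \<in> - loc_space} = 0"
    by (subst emeasure_S) (auto simp: loc_space_def)
  moreover have "{\<omega>\<in>space M. S n \<omega> \<in> - loc_space} \<in> events"
  proof -
    have "S n -` (- loc_space) \<inter> space M \<in> events" by (rule measurable_sets[OF S_meas]) auto
    moreover have "{\<omega>\<in>space M. S n \<omega> \<in> - loc_space} = S n -` (- loc_space) \<inter> space M" by auto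
    ultimately show ?thesis by simp
  qed
  ultimately show ?thesis
    by (subst AE_iff_measurable[where N="{\<omega>\<in>space M. S n \<omega> \<in> - loc_space}"]) auto
qed

lemma AE_S_abs: "AE \<omega> in M. \<bar>S n \<omega>\<bar> \<le> 1"
  using AE_S[of n] by eventually_elim (auto simp: loc_space_def)

lemma integrable_S_fun:
  fixes g :: "real \<Rightarrow> real"
  assumes [measurable]: "g \<in> borel_measurable borel" and cont: "continuous_on {-1..1} g"
  shows "integrable M (\<lambda>\<omega>. g (S n \<omega>))"
proof -
  have "bounded (g ` {-1..1})" by (rule compact_imp_bounded[OF compact_continuous_image[OF cont]]) simp
  then obtain B where B0: "\<forall>x\<in>{-1..1}. norm (g x) \<le> B" unfolding bounded_iff by auto
  then have B: "\<And>x. x \<in> {-1..1} \<Longrightarrow> norm (g x) \<le> B" by auto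
  have "AE \<omega> in M. norm (g (S n \<omega>)) \<le> B"
    using AE_S_abs[of n] by eventually_elim (rule B, auto simp: abs_le_iff)
  then show ?thesis
    by (rule integrable_const_bound[where B=B]) simp
qed

lemma expect_S_fun:
  fixes g :: "real \<Rightarrow> real"
  assumes [measurable]: "g \<in> borel_measurable borel"
  shows "expectation (\<lambda>\<omega>. g (S n \<omega>)) = 4/7 * (\<integral>x. indicator loc_space x * g x \<partial>lborel)"
proof -
  have "expectation (\<lambda>\<omega>. g (S n \<omega>)) = (\<integral>x. (indicator loc_space x / measure lborel loc_space) * g x \<partial>lborel)"
    by (rule distributed_integral[OF S_distr, symmetric]) auto
  also have "(\<lambda>x. (indicator loc_space x / measure lborel loc_space) * g x) = (\<lambda>x. 4/7 * (indicator loc_space x * g x))"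
    by (simp add: loc_meas fun_eq_iff)
  finally show ?thesis by (simp only: integral_mult_right_zero)
qed

lemma expect_eps: "expectation (eps n) = 0" and integrable_eps: "integrable M (eps n)"
  and expect_eps2: "expectation (\<lambda>\<omega>. (eps n \<omega>)^2) = 1" and integrable_eps2: "integrable M (\<lambda>\<omega>. (eps n \<omega>)^2)"
proof -
  show "expectation (eps n) = 0"
    using distributed_integral[OF eps_distr, of "\<lambda>x. x"] integral_std_normal_moment_odd[of 0] by simp
  show "integrable M (eps n)"
    using distributed_integrable[OF eps_distr, of "\<lambda>x. x"] integrable_std_normal_moment[of 1] by simp
  show "expectation (\<lambda>\<omega>. (eps n \<omega>)^2) = 1"
    using distributed_integral[OF eps_distr, of "\<lambda>x. x^2"] integral_std_normal_moment_even[of 1] by simp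
  show "integrable M (\<lambda>\<omega>. (eps n \<omega>)^2)"
    using distributed_integrable[OF eps_distr, of "\<lambda>x. x^2"] integrable_std_normal_moment[of 2] by simp
qed

lemma E_prod:
  fixes g :: "nat + nat \<Rightarrow> real \<Rightarrow> real"
  assumes J: "finite J" and g[measurable]: "\<And>k. k \<in> J \<Longrightarrow> g k \<in> borel_measurable borel"
    and int: "\<And>k. k \<in> J \<Longrightarrow> integrable M (\<lambda>\<omega>. g k (X k \<omega>))"
  shows "integrable M (\<lambda>\<omega>. \<Prod>k\<in>J. g k (X k \<omega>))"
    "expectation (\<lambda>\<omega>. \<Prod>k\<in>J. g k (X k \<omega>)) = (\<Prod>k\<in>J. expectation (\<lambda>\<omega>. g k (X k \<omega>)))"
proof -
  have ind: "indep_vars (\<lambda>_. borel) (\<lambda>k \<omega>. g k (X k \<omega>)) J"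
    by (rule indep_vars_compose2[OF indep_vars_subset[OF indep]]) (auto simp: g)
  show "integrable M (\<lambda>\<omega>. \<Prod>k\<in>J. g k (X k \<omega>))"
    apply (rule indep_vars_integrable)
    using J ind int by auto
  show "expectation (\<lambda>\<omega>. \<Prod>k\<in>J. g k (X k \<omega>)) = (\<Prod>k\<in>J. expectation (\<lambda>\<omega>. g k (X k \<omega>)))"
    apply (rule indep_vars_lebesgue_integral)
    using J ind int by auto
qed

end

context exsetup begin

lemma XS[simp]: "X (Inl n) = S n" and Xe[simp]: "X (Inr n) = eps n"
  by (simp_all add: XX_def)

lemma E2:
  fixes a b :: "real \<Rightarrow> real"
  assumes [measurable]: "a \<in> borel_measurable borel" "b \<in> borel_measurable borel"
    and ia: "integrable M (\<lambda>\<omega>. a (S i \<omega>))" and ib: "integrable M (\<lambda>\<omega>. b (eps i \<omega>))"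
  shows "integrable M (\<lambda>\<omega>. a (S i \<omega>) * b (eps i \<omega>))"
    "expectation (\<lambda>\<omega>. a (S i \<omega>) * b (eps i \<omega>)) = expectation (\<lambda>\<omega>. a (S i \<omega>)) * expectation (\<lambda>\<omega>. b (eps i \<omega>))"
proof -
  define g where "g = (\<lambda>k::nat+nat. case k of Inl n \<Rightarrow> a | Inr n \<Rightarrow> b)"
  have g[measurable]: "g k \<in> borel_measurable borel" for k by (simp add: g_def split: sum.split)
  have int: "integrable M (\<lambda>\<omega>. g k (X k \<omega>))" if "k \<in> {Inl i, Inr i}" for k
    using that ia ib by (auto simp: g_def)
  note E_prod[of "{Inl i, Inr i}" g, OF _ g int]
  then show "integrable M (\<lambda>\<omega>. a (S i \<omega>) * b (eps i \<omega>))"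
    "expectation (\<lambda>\<omega>. a (S i \<omega>) * b (eps i \<omega>)) = expectation (\<lambda>\<omega>. a (S i \<omega>)) * expectation (\<lambda>\<omega>. b (eps i \<omega>))"
    by (simp_all add: g_def)
qed

lemma E4:
  fixes a b c d :: "real \<Rightarrow> real"
  assumes ij: "i \<noteq> j"
    and [measurable]: "a \<in> borel_measurable borel" "b \<in> borel_measurable borel"
      "c \<in> borel_measurable borel" "d \<in> borel_measurable borel"
    and ia: "integrable M (\<lambda>\<omega>. a (S i \<omega>))" and ib: "integrable M (\<lambda>\<omega>. b (eps i \<omega>))"
    and ic: "integrable M (\<lambda>\<omega>. c (S j \<omega>))" and id: "integrable M (\<lambda>\<omega>. d (eps j \<omega>))"
  shows "integrable M (\<lambda>\<omega>. a (S i \<omega>) * b (eps i \<omega>) * c (S j \<omega>) * d (eps j \<omega>))"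
    "expectation (\<lambda>\<omega>. a (S i \<omega>) * b (eps i \<omega>) * c (S j \<omega>) * d (eps j \<omega>)) =
       expectation (\<lambda>\<omega>. a (S i \<omega>)) * expectation (\<lambda>\<omega>. b (eps i \<omega>)) *
       expectation (\<lambda>\<omega>. c (S j \<omega>)) * expectation (\<lambda>\<omega>. d (eps j \<omega>))"
proof -
  define g where "g = (\<lambda>k::nat+nat. case k of Inl n \<Rightarrow> if n = i then a else c | Inr n \<Rightarrow> if n = i then b else d)"
  have g[measurable]: "g k \<in> borel_measurable borel" for k by (simp add: g_def split: sum.split)
  have int: "integrable M (\<lambda>\<omega>. g k (X k \<omega>))" if "k \<in> {Inl i, Inr i, Inl j, Inr j}" for k
    using that ia ib ic id ij by (auto simp: g_def)
  have fin: "finite {Inl i, Inr i, Inl j, Inr j}" by simp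
  have ne: "Inl i \<notin> {Inr i, Inl j, Inr j}" "Inr i \<notin> {Inl j, Inr j}" "Inl j \<notin> {Inr j}"
    using ij by auto
  have p: "(\<lambda>\<omega>. \<Prod>k\<in>{Inl i, Inr i, Inl j, Inr j}. g k (X k \<omega>)) = (\<lambda>\<omega>. a (S i \<omega>) * b (eps i \<omega>) * c (S j \<omega>) * d (eps j \<omega>))"
    using ij by (simp add: prod.insert[OF _ ne(1)] prod.insert[OF _ ne(2)] prod.insert[OF _ ne(3)] g_def mult.assoc)
  have q: "(\<Prod>k\<in>{Inl i, Inr i, Inl j, Inr j}. expectation (\<lambda>\<omega>. g k (X k \<omega>))) =
       expectation (\<lambda>\<omega>. a (S i \<omega>)) * expectation (\<lambda>\<omega>. b (eps i \<omega>)) *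
       expectation (\<lambda>\<omega>. c (S j \<omega>)) * expectation (\<lambda>\<omega>. d (eps j \<omega>))"
    using ij by (simp add: prod.insert[OF _ ne(1)] prod.insert[OF _ ne(2)] prod.insert[OF _ ne(3)] g_def mult.assoc)
  show "integrable M (\<lambda>\<omega>. a (S i \<omega>) * b (eps i \<omega>) * c (S j \<omega>) * d (eps j \<omega>))"
    using E_prod(1)[OF fin g int] unfolding p .
  show "expectation (\<lambda>\<omega>. a (S i \<omega>) * b (eps i \<omega>) * c (S j \<omega>) * d (eps j \<omega>)) =
       expectation (\<lambda>\<omega>. a (S i \<omega>)) * expectation (\<lambda>\<omega>. b (eps i \<omega>)) *
       expectation (\<lambda>\<omega>. c (S j \<omega>)) * expectation (\<lambda>\<omega>. d (eps j \<omega>))"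
    using E_prod(2)[OF fin g int] unfolding p q .
qed

lemma ES3: "expectation (\<lambda>\<omega>. (S n \<omega>)^3) = 25/256"
proof -
  have "expectation (\<lambda>\<omega>. (S n \<omega>)^3) = 4/7 * (\<integral>x. indicator loc_space x * x^3 \<partial>lborel)"
    by (rule expect_S_fun) auto
  also have "(\<integral>x. indicator loc_space x * x^3 \<partial>lborel) = (\<integral>x. x^3 * indicator {-3/4..1} x \<partial>lborel)"
    by (simp add: loc_space_def mult.commute)
  also have "\<dots> = (1^Suc 3 - (-3/4)^Suc 3) / Suc 3"
    by (rule integral_power) simp
  also have "\<dots> = 175/1024" by (simp add: eval_nat_numeral)
  finally show ?thesis by simp
qed

definition W :: "nat \<Rightarrow> 'a \<Rightarrow> real" where
  "W n \<omega> = (S n \<omega>)^3 - 25/256 + S n \<omega> * eps n \<omega>"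

lemma W_meas[measurable]: "W n \<in> borel_measurable M"
  unfolding W_def by measurable

lemma int_S3: "integrable M (\<lambda>\<omega>. (S n \<omega>)^3 - 25/256)"
  by (rule integrable_S_fun) (auto intro!: continuous_intros)
lemma int_S1: "integrable M (\<lambda>\<omega>. S n \<omega>)"
  using integrable_S_fun[of "\<lambda>x. x" n] by (auto intro!: continuous_intros)
lemma int_one: "integrable M (\<lambda>\<omega>. (\<lambda>x. 1::real) (eps n \<omega>))"
  by simp
lemma int_eps: "integrable M (\<lambda>\<omega>. (\<lambda>x. x) (eps n \<omega>))"
  using integrable_eps by simp
lemma E_A: "expectation (\<lambda>\<omega>. (S n \<omega>)^3 - 25/256) = 0"
proof -
  have "expectation (\<lambda>\<omega>. (S n \<omega>)^3 - 25/256) = expectation (\<lambda>\<omega>. (S n \<omega>)^3) - expectation (\<lambda>\<omega>. 25/256)"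
    by (rule Bochner_Integration.integral_diff)
       (rule integrable_S_fun, auto intro!: continuous_intros)
  then show ?thesis by (simp add: ES3 prob_space)
qed

lemma exp_le_AE:
  fixes f :: "'a \<Rightarrow> real"
  assumes "integrable M f" "AE \<omega> in M. f \<omega> \<le> B"
  shows "expectation f \<le> B"
proof -
  have "expectation f \<le> expectation (\<lambda>_. B)"
    by (rule integral_mono_AE) (use assms in auto)
  then show ?thesis by (simp add: prob_space)
qed

lemma W_cross:
  assumes ij: "i \<noteq> j"
  shows "integrable M (\<lambda>\<omega>. W i \<omega> * W j \<omega>)" "expectation (\<lambda>\<omega>. W i \<omega> * W j \<omega>) = 0"
proof -
  define fA where "fA = (\<lambda>x::real. x^3 - 25/256)"
  define fI where "fI = (\<lambda>x::real. x)"
  define fO where "fO = (\<lambda>x::real. 1::real)"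
  have m: "fA \<in> borel_measurable borel" "fI \<in> borel_measurable borel" "fO \<in> borel_measurable borel"
    unfolding fA_def fI_def fO_def by measurable
  have iA: "integrable M (\<lambda>\<omega>. fA (S n \<omega>))" for n unfolding fA_def by (rule int_S3)
  have iI: "integrable M (\<lambda>\<omega>. fI (S n \<omega>))" for n unfolding fI_def by (rule int_S1)
  have iIe: "integrable M (\<lambda>\<omega>. fI (eps n \<omega>))" for n unfolding fI_def by (rule integrable_eps)
  have iO: "integrable M (\<lambda>\<omega>. fO (eps n \<omega>))" for n unfolding fO_def by simp
  have EA: "expectation (\<lambda>\<omega>. fA (S n \<omega>)) = 0" for n unfolding fA_def by (rule E_A)
  have EI: "expectation (\<lambda>\<omega>. fI (eps n \<omega>)) = 0" for n unfolding fI_def by (rule expect_eps)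
  note t1 = E4[OF ij m(1) m(3) m(1) m(3) iA iO iA iO]
  note t2 = E4[OF ij m(1) m(3) m(2) m(2) iA iO iI iIe]
  note t3 = E4[OF ij m(2) m(2) m(1) m(3) iI iIe iA iO]
  note t4 = E4[OF ij m(2) m(2) m(2) m(2) iI iIe iI iIe]
  have eq: "(\<lambda>\<omega>. W i \<omega> * W j \<omega>) = (\<lambda>\<omega>.
     fA (S i \<omega>) * fO (eps i \<omega>) * fA (S j \<omega>) * fO (eps j \<omega>) + fA (S i \<omega>) * fO (eps i \<omega>) * fI (S j \<omega>) * fI (eps j \<omega>)
     + fI (S i \<omega>) * fI (eps i \<omega>) * fA (S j \<omega>) * fO (eps j \<omega>) + fI (S i \<omega>) * fI (eps i \<omega>) * fI (S j \<omega>) * fI (eps j \<omega>))"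
    by (rule ext) (simp add: W_def fA_def fI_def fO_def field_simps)
  show "integrable M (\<lambda>\<omega>. W i \<omega> * W j \<omega>)"
    unfolding eq using t1(1) t2(1) t3(1) t4(1) by (intro Bochner_Integration.integrable_add)
  show "expectation (\<lambda>\<omega>. W i \<omega> * W j \<omega>) = 0"
    unfolding eq using t1 t2 t3 t4 EA EI
    by (simp only: Bochner_Integration.integral_add Bochner_Integration.integrable_add mult_zero_left mult_zero_right add_0)
qed

lemma W_sq:
  shows "integrable M (\<lambda>\<omega>. W i \<omega> * W i \<omega>)" "expectation (\<lambda>\<omega>. W i \<omega> * W i \<omega>) \<le> 5"
proof -
  define fA2 where "fA2 = (\<lambda>x::real. (x^3 - 25/256)^2)"
  define fA where "fA = (\<lambda>x::real. 2 * (x^3 - 25/256) * x)"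
  define fS2 where "fS2 = (\<lambda>x::real. x^2)"
  define fI where "fI = (\<lambda>x::real. x)"
  define fO where "fO = (\<lambda>x::real. 1::real)"
  have m: "fA2 \<in> borel_measurable borel" "fA \<in> borel_measurable borel" "fS2 \<in> borel_measurable borel"
     "fI \<in> borel_measurable borel" "fO \<in> borel_measurable borel"
    unfolding fA2_def fA_def fS2_def fI_def fO_def by measurable
  have iA2: "integrable M (\<lambda>\<omega>. fA2 (S i \<omega>))" unfolding fA2_def by (rule integrable_S_fun) (auto intro!: continuous_intros)
  have iA: "integrable M (\<lambda>\<omega>. fA (S i \<omega>))" unfolding fA_def by (rule integrable_S_fun) (auto intro!: continuous_intros)
  have iS2: "integrable M (\<lambda>\<omega>. fS2 (S i \<omega>))" unfolding fS2_def by (rule integrable_S_fun) (auto intro!: continuous_intros)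
  have iIe: "integrable M (\<lambda>\<omega>. fI (eps i \<omega>))" unfolding fI_def by (rule integrable_eps)
  have iS2e: "integrable M (\<lambda>\<omega>. fS2 (eps i \<omega>))" unfolding fS2_def by (rule integrable_eps2)
  have iO: "integrable M (\<lambda>\<omega>. fO (eps i \<omega>))" unfolding fO_def by simp
  note t1 = E2[OF m(1) m(5) iA2 iO]
  note t2 = E2[OF m(2) m(4) iA iIe]
  note t3 = E2[OF m(3) m(3) iS2 iS2e]
  have EI: "expectation (\<lambda>\<omega>. fI (eps i \<omega>)) = 0" unfolding fI_def by (rule expect_eps)
  have ES2: "expectation (\<lambda>\<omega>. fS2 (eps i \<omega>)) = 1" unfolding fS2_def by (rule expect_eps2)
  have EO: "expectation (\<lambda>\<omega>. fO (eps i \<omega>)) = 1" unfolding fO_def by (simp add: prob_space)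
  have eq: "(\<lambda>\<omega>. W i \<omega> * W i \<omega>) = (\<lambda>\<omega>.
     fA2 (S i \<omega>) * fO (eps i \<omega>) + fA (S i \<omega>) * fI (eps i \<omega>) + fS2 (S i \<omega>) * fS2 (eps i \<omega>))"
  proof (rule ext)
    fix \<omega>
    have k: "(x^3 - c + x*e)*(x^3 - c + x*e) = (x^3-c)^2*1 + 2*(x^3-c)*x*e + x^2*e^2" for x e c :: real
      by (simp add: power2_eq_square algebra_simps)
    show "W i \<omega> * W i \<omega> = fA2 (S i \<omega>) * fO (eps i \<omega>) + fA (S i \<omega>) * fI (eps i \<omega>) + fS2 (S i \<omega>) * fS2 (eps i \<omega>)"
      unfolding W_def fA2_def fA_def fS2_def fI_def fO_def by (rule k)
  qed
  have b1: "expectation (\<lambda>\<omega>. fA2 (S i \<omega>)) \<le> 4"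
  proof (rule exp_le_AE[OF iA2])
    show "AE \<omega> in M. fA2 (S i \<omega>) \<le> 4"
      using AE_S_abs[of i]
    proof eventually_elim
      fix \<omega> assume h: "\<bar>S i \<omega>\<bar> \<le> 1"
      have "\<bar>S i \<omega>\<bar>^3 \<le> 1" by (rule power_le_one) (use h in auto)
      then have "\<bar>(S i \<omega>)^3\<bar> \<le> 1" by (simp only: power_abs)
      then have "\<bar>(S i \<omega>)^3 - 25/256\<bar> \<le> 2" by arith
      then have "\<bar>(S i \<omega>)^3 - 25/256\<bar>^2 \<le> 2^2" by (rule power_mono) simp
      then show "fA2 (S i \<omega>) \<le> 4" by (simp add: fA2_def)
    qed
  qed
  have b3: "expectation (\<lambda>\<omega>. fS2 (S i \<omega>)) \<le> 1"
  proof (rule exp_le_AE[OF iS2])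
    show "AE \<omega> in M. fS2 (S i \<omega>) \<le> 1"
      using AE_S_abs[of i]
    proof eventually_elim
      fix \<omega> assume h: "\<bar>S i \<omega>\<bar> \<le> 1"
      then have "\<bar>S i \<omega>\<bar>^2 \<le> 1^2" by (rule power_mono) simp
      then show "fS2 (S i \<omega>) \<le> 1" by (simp add: fS2_def)
    qed
  qed
  show "integrable M (\<lambda>\<omega>. W i \<omega> * W i \<omega>)"
    unfolding eq using t1(1) t2(1) t3(1) by (intro Bochner_Integration.integrable_add)
  have "expectation (\<lambda>\<omega>. W i \<omega> * W i \<omega>) = expectation (\<lambda>\<omega>. fA2 (S i \<omega>)) * 1 + expectation (\<lambda>\<omega>. fA (S i \<omega>)) * 0 + expectation (\<lambda>\<omega>. fS2 (S i \<omega>)) * 1"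
    unfolding eq using t1 t2 t3 EI ES2 EO
    by (simp only: Bochner_Integration.integral_add Bochner_Integration.integrable_add)
  then show "expectation (\<lambda>\<omega>. W i \<omega> * W i \<omega>) \<le> 5" using b1 b3 by linarith
qed

end

lemma ols_big:
  fixes x e :: "nat \<Rightarrow> real" and \<mu> :: real
  assumes N: "N > 0" and mu: "\<mu> > 0" and x: "\<forall>n<N. \<bar>x n\<bar> \<le> 1"
    and T: "\<bar>\<Sum>n<N. (x n)^3 - \<mu> + x n * e n\<bar> < N * \<mu> / 2"
  shows "\<mu> / 2 < \<bar>ols N x (\<lambda>n. fmean (x n) + e n)\<bar>"
proof -
  define Num where "Num = (\<Sum>n<N. x n * (fmean (x n) + e n))"
  define Den where "Den = (\<Sum>n<N. (x n)^2)"
  have A: "Num = (\<Sum>n<N. (x n)^3) + (\<Sum>n<N. x n * e n)"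
    unfolding Num_def fmean_def by (simp add: sum.distrib distrib_left power3_eq_cube power2_eq_square mult.assoc)
  have B: "(\<Sum>n<N. (x n)^3 - \<mu> + x n * e n) = (\<Sum>n<N. (x n)^3) - N*\<mu> + (\<Sum>n<N. x n * e n)"
    by (simp add: sum.distrib sum_subtractf)
  have "Num = (\<Sum>n<N. (x n)^3 - \<mu> + x n * e n) + N * \<mu>"
    unfolding A B by simp
  with T have Num: "Num > N * \<mu> / 2" by linarith
  have "N * \<mu> / 2 > 0" using N mu by simp
  with Num have Npos: "Num > 0" by linarith
  have Den_le: "Den \<le> N"
  proof -
    have "Den \<le> (\<Sum>n<N. 1)" unfolding Den_def
    proof (rule sum_mono)
      fix n assume "n \<in> {..<N}"
      then have "\<bar>x n\<bar> \<le> 1" using x by auto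
      then have "\<bar>x n\<bar>^2 \<le> 1^2" by (rule power_mono) simp
      then show "(x n)^2 \<le> 1" by simp
    qed
    then show ?thesis by simp
  qed
  have Den_pos: "Den > 0"
  proof (rule ccontr)
    assume "\<not> Den > 0"
    moreover have "Den \<ge> 0" unfolding Den_def by (intro sum_nonneg) simp
    ultimately have "Den = 0" by simp
    then have "\<forall>n\<in>{..<N}. (x n)^2 = 0" unfolding Den_def
      by (subst sum_nonneg_eq_0_iff[symmetric]) auto
    then have "Num = 0" unfolding Num_def by simp
    with Npos show False by simp
  qed
  have "ols N x (\<lambda>n. fmean (x n) + e n) = Num / Den"
    unfolding ols_def Num_def Den_def chi_def by (simp add: divide_inverse mult.commute)
  also have "Num / Den \<ge> Num / N"
    using Den_pos Den_le Npos by (intro divide_left_mono) auto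
  finally have "ols N x (\<lambda>n. fmean (x n) + e n) \<ge> Num / N" .
  moreover have "Num / N > \<mu> / 2" using Num N by (simp add: field_simps)
  ultimately show ?thesis by linarith
qed

context exsetup begin

lemma sumW_sq:
  shows "integrable M (\<lambda>\<omega>. (\<Sum>n<N. W n \<omega>)^2)" "expectation (\<lambda>\<omega>. (\<Sum>n<N. W n \<omega>)^2) \<le> 5 * N"
proof -
  have eq: "(\<lambda>\<omega>. (\<Sum>n<N. W n \<omega>)^2) = (\<lambda>\<omega>. \<Sum>i<N. \<Sum>j<N. W i \<omega> * W j \<omega>)"
    by (simp add: power2_eq_square sum_product)
  have int: "integrable M (\<lambda>\<omega>. W i \<omega> * W j \<omega>)" for i j
  proof (cases "i = j")
    case True then show ?thesis using W_sq(1)[of i] by simp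
  next
    case False then show ?thesis by (rule W_cross(1))
  qed
  have E: "(\<Sum>j<N. expectation (\<lambda>\<omega>. W i \<omega> * W j \<omega>)) = expectation (\<lambda>\<omega>. W i \<omega> * W i \<omega>)"
    if i: "i \<in> {..<N}" for i
  proof -
    have "(\<Sum>j<N. expectation (\<lambda>\<omega>. W i \<omega> * W j \<omega>)) = expectation (\<lambda>\<omega>. W i \<omega> * W i \<omega>)
       + (\<Sum>j\<in>{..<N} - {i}. expectation (\<lambda>\<omega>. W i \<omega> * W j \<omega>))"
      by (rule sum.remove[OF _ i]) simp
    also have "(\<Sum>j\<in>{..<N} - {i}. expectation (\<lambda>\<omega>. W i \<omega> * W j \<omega>)) = 0"
      by (rule sum.neutral) (auto intro: W_cross(2))
    finally show ?thesis by simp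
  qed
  show "integrable M (\<lambda>\<omega>. (\<Sum>n<N. W n \<omega>)^2)"
    unfolding eq by (intro Bochner_Integration.integrable_sum int)
  have "expectation (\<lambda>\<omega>. (\<Sum>n<N. W n \<omega>)^2) = (\<Sum>i<N. expectation (\<lambda>\<omega>. \<Sum>j<N. W i \<omega> * W j \<omega>))"
    unfolding eq by (rule Bochner_Integration.integral_sum) (intro Bochner_Integration.integrable_sum int)
  also have "\<dots> = (\<Sum>i<N. \<Sum>j<N. expectation (\<lambda>\<omega>. W i \<omega> * W j \<omega>))"
    by (intro sum.cong refl Bochner_Integration.integral_sum int)
  also have "\<dots> = (\<Sum>i<N. expectation (\<lambda>\<omega>. W i \<omega> * W i \<omega>))"
    by (rule sum.cong[OF refl E])
  also have "\<dots> \<le> (\<Sum>i<N. 5)"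
    by (rule sum_mono) (rule W_sq(2))
  finally show "expectation (\<lambda>\<omega>. (\<Sum>n<N. W n \<omega>)^2) \<le> 5 * N" by simp
qed

lemma ols_event_meas:
  "{\<omega>\<in>space M. c < \<bar>ols N (\<lambda>n. S n \<omega>) (\<lambda>n. fmean (S n \<omega>) + eps n \<omega>) - 0\<bar>} \<in> events"
  unfolding ols_def chi_def fmean_def by measurable

lemma ols_prob_lower:
  assumes N: "N > 0"
  shows "measure M {\<omega>\<in>space M. 25/512 < \<bar>ols N (\<lambda>n. S n \<omega>) (\<lambda>n. fmean (S n \<omega>) + eps n \<omega>) - 0\<bar>}
     \<ge> 1 - (5 / (25/512)^2) * inverse (real N)"
proof -
  define T where "T = (\<lambda>\<omega>. \<Sum>n<N. W n \<omega>)"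
  define a where "a = N * (25/256) / 2"
  have a: "a > 0" using N by (simp add: a_def)
  have Tm[measurable]: "T \<in> borel_measurable M" unfolding T_def by measurable
  have "prob {\<omega>\<in>space M. \<bar>T \<omega>\<bar> \<ge> a} \<le> expectation (\<lambda>\<omega>. (T \<omega>)^2) / a^2"
    by (rule second_moment_method) (use a sumW_sq(1) in \<open>auto simp: T_def\<close>)
  also have "\<dots> \<le> 5 * N / a^2"
    using sumW_sq(2)[of N] a unfolding T_def by (intro divide_right_mono) auto
  also have "5 * N / a^2 = (5 / (25/512)^2) * inverse (real N)"
    using N unfolding a_def by (simp add: power2_eq_square field_simps)
  finally have P1: "prob {\<omega>\<in>space M. \<bar>T \<omega>\<bar> \<ge> a} \<le> (5 / (25/512)^2) * inverse (real N)" .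
  have ev: "{\<omega>\<in>space M. \<bar>T \<omega>\<bar> \<ge> a} \<in> events" by measurable
  have "prob (space M - {\<omega>\<in>space M. \<bar>T \<omega>\<bar> \<ge> a}) = 1 - prob {\<omega>\<in>space M. \<bar>T \<omega>\<bar> \<ge> a}"
    by (rule prob_compl[OF ev])
  moreover have "space M - {\<omega>\<in>space M. \<bar>T \<omega>\<bar> \<ge> a} = {\<omega>\<in>space M. \<bar>T \<omega>\<bar> < a}" by auto
  ultimately have P2: "prob {\<omega>\<in>space M. \<bar>T \<omega>\<bar> < a} \<ge> 1 - (5 / (25/512)^2) * inverse (real N)" using P1 by simp
  have AEx: "AE \<omega> in M. \<forall>n\<in>{..<N}. \<bar>S n \<omega>\<bar> \<le> 1"
    by (rule AE_finite_allI) (auto intro: AE_S_abs)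
  have "prob {\<omega>\<in>space M. \<bar>T \<omega>\<bar> < a} \<le>
      measure M {\<omega>\<in>space M. 25/512 < \<bar>ols N (\<lambda>n. S n \<omega>) (\<lambda>n. fmean (S n \<omega>) + eps n \<omega>) - 0\<bar>}"
  proof (rule finite_measure_mono_AE[OF _ ols_event_meas])
    show "AE \<omega> in M. \<omega> \<in> {\<omega>\<in>space M. \<bar>T \<omega>\<bar> < a} \<longrightarrow>
       \<omega> \<in> {\<omega>\<in>space M. 25/512 < \<bar>ols N (\<lambda>n. S n \<omega>) (\<lambda>n. fmean (S n \<omega>) + eps n \<omega>) - 0\<bar>}"
      using AEx
    proof eventually_elim
      fix \<omega> assume h: "\<forall>n\<in>{..<N}. \<bar>S n \<omega>\<bar> \<le> 1"
      show "\<omega> \<in> {\<omega>\<in>space M. \<bar>T \<omega>\<bar> < a} \<longrightarrow>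
       \<omega> \<in> {\<omega>\<in>space M. 25/512 < \<bar>ols N (\<lambda>n. S n \<omega>) (\<lambda>n. fmean (S n \<omega>) + eps n \<omega>) - 0\<bar>}"
      proof
        assume "\<omega> \<in> {\<omega>\<in>space M. \<bar>T \<omega>\<bar> < a}"
        then have sp: "\<omega> \<in> space M" and Ta0: "\<bar>T \<omega>\<bar> < a" by simp_all
        have "T \<omega> = (\<Sum>n<N. (S n \<omega>)^3 - 25/256 + S n \<omega> * eps n \<omega>)"
          unfolding T_def W_def by (rule refl)
        with Ta0 have Ta: "\<bar>\<Sum>n<N. (S n \<omega>)^3 - 25/256 + S n \<omega> * eps n \<omega>\<bar> < N * (25/256) / 2"
          unfolding a_def by simp
        have "(25/256) / 2 < \<bar>ols N (\<lambda>n. S n \<omega>) (\<lambda>n. fmean (S n \<omega>) + eps n \<omega>)\<bar>"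
          by (rule ols_big[OF N _ _ Ta]) (use h in auto)
        then show "\<omega> \<in> {\<omega>\<in>space M. 25/512 < \<bar>ols N (\<lambda>n. S n \<omega>) (\<lambda>n. fmean (S n \<omega>) + eps n \<omega>) - 0\<bar>}"
          using sp by simp
      qed
    qed
  qed
  with P2 show ?thesis by linarith
qed

lemma ols_part:
  "\<not> conv_in_prob M (\<lambda>N \<omega>. ols N (\<lambda>n. S n \<omega>) (\<lambda>n. fmean (S n \<omega>) + eps n \<omega>)) 0"
proof
  assume H: "conv_in_prob M (\<lambda>N \<omega>. ols N (\<lambda>n. S n \<omega>) (\<lambda>n. fmean (S n \<omega>) + eps n \<omega>)) 0"
  have pos: "(25/512::real) > 0" by simp
  have lim: "(\<lambda>N. measure M {\<omega>\<in>space M. 25/512 < \<bar>ols N (\<lambda>n. S n \<omega>) (\<lambda>n. fmean (S n \<omega>) + eps n \<omega>) - 0\<bar>}) \<longlonglongrightarrow> 0"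
    using H[unfolded conv_in_prob_def, rule_format, OF pos] .
  have lim2: "(\<lambda>N. 1 - (5 / (25/512)^2) * inverse (real N)) \<longlonglongrightarrow> 1 - (5 / (25/512)^2) * 0"
    by (rule tendsto_diff[OF tendsto_const tendsto_mult[OF tendsto_const lim_inverse_n]])
  have "1 - (5 / (25/512)^2) * 0 \<le> (0::real)"
  proof (rule LIMSEQ_le[OF lim2 lim])
    show "\<exists>N0. \<forall>N\<ge>N0. 1 - (5 / (25/512)^2) * inverse (real N) \<le>
      measure M {\<omega>\<in>space M. 25/512 < \<bar>ols N (\<lambda>n. S n \<omega>) (\<lambda>n. fmean (S n \<omega>) + eps n \<omega>) - 0\<bar>}"
    proof (intro exI allI impI)
      fix N :: nat assume "N \<ge> 1"
      then have "N > 0" by simp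
      then show "1 - (5 / (25/512)^2) * inverse (real N) \<le>
        measure M {\<omega>\<in>space M. 25/512 < \<bar>ols N (\<lambda>n. S n \<omega>) (\<lambda>n. fmean (S n \<omega>) + eps n \<omega>) - 0\<bar>}"
        by (rule ols_prob_lower)
    qed
  qed
  then show False by simp
qed

end

context exsetup begin

lemma prob_S_notin:
  assumes B: "B \<in> sets borel"
  shows "prob {\<omega>\<in>space M. S n \<omega> \<notin> B} = 1 - 4/7 * measure lborel (B \<inter> loc_space)"
proof -
  have ev: "{\<omega>\<in>space M. S n \<omega> \<in> B} \<in> events"
  proof -
    have "S n -` B \<inter> space M \<in> events" by (rule measurable_sets[OF S_meas B])
    moreover have "{\<omega>\<in>space M. S n \<omega> \<in> B} = S n -` B \<inter> space M" by auto
    ultimately show ?thesis by simp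
  qed
  have "{\<omega>\<in>space M. S n \<omega> \<notin> B} = space M - {\<omega>\<in>space M. S n \<omega> \<in> B}" by auto
  then show ?thesis using prob_compl[OF ev] prob_S[OF B] by simp
qed

lemma prob_all_notin:
  assumes J: "finite J" "J \<noteq> {}" and B: "B \<in> sets borel"
  shows "prob {\<omega>\<in>space M. \<forall>n\<in>J. S n \<omega> \<notin> B} = (1 - 4/7 * measure lborel (B \<inter> loc_space)) ^ card J"
proof -
  have "prob (\<Inter>k\<in>Inl ` J. X k -` (- B) \<inter> space M) = (\<Prod>k\<in>Inl ` J. prob (X k -` (- B) \<inter> space M))"
    by (rule indep_varsD[OF indep]) (use J B in auto)
  moreover have "(\<Inter>k\<in>Inl ` J. X k -` (- B) \<inter> space M) = {\<omega>\<in>space M. \<forall>n\<in>J. S n \<omega> \<notin> B}"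
    using J by (auto simp: XX_def)
  moreover have "(\<Prod>k\<in>Inl ` J. prob (X k -` (- B) \<inter> space M)) = (\<Prod>n\<in>J. prob (S n -` (- B) \<inter> space M))"
    by (subst prod.reindex) (auto simp: inj_on_def XX_def)
  moreover have "prob (S n -` (- B) \<inter> space M) = 1 - 4/7 * measure lborel (B \<inter> loc_space)" for n
  proof -
    have "S n -` (- B) \<inter> space M = {\<omega>\<in>space M. S n \<omega> \<notin> B}" by auto
    then show ?thesis using prob_S_notin[OF B] by simp
  qed
  ultimately show ?thesis by simp
qed

lemma AE_visit:
  assumes t: "t \<in> {1/2, -1/2}" and r: "0 < r" "r \<le> 1/4"
  shows "AE \<omega> in M. \<exists>n\<ge>m. S n \<omega> \<in> ball t r"
proof -
  define B where "B = ball t r"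
  have Bm[measurable]: "B \<in> sets borel" unfolding B_def by simp
  have BL: "B \<inter> loc_space = {t - r <..< t + r}"
    using t r unfolding B_def ball_eq_greaterThanLessThan loc_space_def by auto
  define p where "p = 1 - 4/7 * (2 * r)"
  have p: "0 \<le> p" "p < 1" using r by (auto simp: p_def)
  have mB: "1 - 4/7 * measure lborel (B \<inter> loc_space) = p"
    unfolding BL p_def using r by simp
  define E where "E = {\<omega>\<in>space M. \<forall>n\<ge>m. S n \<omega> \<notin> B}"
  have Em: "E \<in> events" unfolding E_def by measurable
  have le: "prob E \<le> p ^ K" for K
  proof (cases "K = 0")
    case True then show ?thesis by simp
  next
    case False
    have "prob E \<le> prob {\<omega>\<in>space M. \<forall>n\<in>{m..<m+K}. S n \<omega> \<notin> B}"
      by (rule finite_measure_mono) (auto simp: E_def)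
    also have "\<dots> = p ^ K"
      using prob_all_notin[of "{m..<m+K}" B] False mB by simp
    finally show ?thesis .
  qed
  have "prob E \<le> 0"
  proof (rule LIMSEQ_le_const)
    show "(\<lambda>K. p ^ K) \<longlonglongrightarrow> 0" by (rule LIMSEQ_power_zero) (use p in simp)
    show "\<exists>N. \<forall>K\<ge>N. prob E \<le> p ^ K" using le by auto
  qed
  then have "prob E = 0" by (simp add: measure_le_0_iff)
  then have "emeasure M E = 0" by (simp add: emeasure_eq_measure)
  moreover have "{\<omega>\<in>space M. \<not> (\<exists>n\<ge>m. S n \<omega> \<in> B)} = E" unfolding E_def by auto
  ultimately show ?thesis
    unfolding B_def[symmetric] by (subst AE_iff_measurable[OF Em]) auto
qed

lemma infill_part: "AE \<omega> in M. infill (\<lambda>n. S n \<omega>) {Sstar 1, Sstar 2}"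
proof -
  have "AE \<omega> in M. \<forall>k::nat. \<forall>m::nat. \<forall>t\<in>{1/2, -1/2::real}. \<exists>n\<ge>m. S n \<omega> \<in> ball t (1 / (real k + 4))"
    unfolding AE_all_countable
  proof (intro allI)
    fix k m :: nat
    have r1: "0 < 1/(real k + 4)" by simp
    have r2: "1/(real k + 4) \<le> 1/4" by (rule divide_left_mono) auto
    show "AE \<omega> in M. \<forall>t\<in>{1/2, -1/2::real}. \<exists>n\<ge>m. S n \<omega> \<in> ball t (1 / (real k + 4))"
      by (rule AE_finite_allI) (use AE_visit[OF _ r1 r2] in auto)
  qed
  then show ?thesis
  proof eventually_elim
    fix \<omega> assume h: "\<forall>k::nat. \<forall>m::nat. \<forall>t\<in>{1/2, -1/2::real}. \<exists>n\<ge>m. S n \<omega> \<in> ball t (1 / (real k + 4))"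
    show "infill (\<lambda>n. S n \<omega>) {Sstar 1, Sstar 2}"
      unfolding infill_def
    proof (intro ballI allI impI)
      fix t U assume t: "t \<in> {Sstar 1, Sstar 2}" and U: "open U \<and> t \<in> U"
      then have t': "t \<in> {1/2, -1/2}" by (auto simp: Sstar_def)
      obtain e where e: "e > 0" "ball t e \<subseteq> U" using U open_contains_ball by blast
      obtain k :: nat where k: "inverse (real (Suc k)) < e" using reals_Archimedean[OF e(1)] by blast
      have "1 / (real k + 4) \<le> inverse (real (Suc k))" by (simp add: field_simps)
      with k have "ball t (1 / (real k + 4)) \<subseteq> U" using e(2) by auto
      moreover have "infinite {n. S n \<omega> \<in> ball t (1 / (real k + 4))}"
        unfolding infinite_nat_iff_unbounded_le
      proof
        fix m
        have "\<exists>n\<ge>m. S n \<omega> \<in> ball t (1 / (real k + 4))" using h t' by blast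
        then show "\<exists>n\<ge>m. n \<in> {n. S n \<omega> \<in> ball t (1 / (real k + 4))}" by simp
      qed
      ultimately show "infinite {n. S n \<omega> \<in> U}"
        using infinite_super[of "{n. S n \<omega> \<in> ball t (1 / (real k + 4))}" "{n. S n \<omega> \<in> U}"] by blast
    qed
  qed
qed

end

lemma coord_meas[measurable]: "(\<lambda>w. w k) \<in> borel_measurable (PiM K (\<lambda>_. (borel :: real measure)))"
proof (cases "k \<in> K")
  case True then show ?thesis by (rule measurable_component_singleton)
next
  case False
  have "(\<lambda>w::_\<Rightarrow>real. undefined :: real) \<in> borel_measurable (PiM K (\<lambda>_. (borel :: real measure)))" by simp
  then show ?thesis
    by (rule measurable_cong[THEN iffD1, rotated]) (use False in \<open>auto simp: space_PiM PiE_def extensional_def\<close>)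
qed

context exsetup begin

lemma normal_interval:
  assumes c: "c = 1 \<or> c = -1" and e: "0 \<le> e"
  shows "emeasure M {\<omega>\<in>space M. \<bar>c * eps i \<omega> + r\<bar> \<le> e} \<le> ennreal e"
proof -
  obtain a where A: "{z::real. \<bar>c * z + r\<bar> \<le> e} = {a .. a + 2*e}"
  proof (cases "c = 1")
    case True
    then have "{z::real. \<bar>c * z + r\<bar> \<le> e} = {-r-e .. -r-e + 2*e}" by (auto simp: abs_le_iff)
    then show ?thesis by (rule that)
  next
    case False
    with c have "c = -1" by simp
    then have "{z::real. \<bar>c * z + r\<bar> \<le> e} = {r-e .. r-e + 2*e}" by (auto simp: abs_le_iff)
    then show ?thesis by (rule that)
  qed
  have D: "distr M lborel (eps i) = density lborel (\<lambda>x. ennreal (std_normal_density x))"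
    using eps_distr[of i] unfolding distributed_def by simp
  have dens_le: "std_normal_density x \<le> 1/2" for x
  proof -
    have s2: "2 \<le> sqrt (2 * pi)"
      using pi_gt3 by (subst real_le_rsqrt) auto
    have "std_normal_density x = exp (- x\<^sup>2 / 2) / sqrt (2 * pi)" unfolding std_normal_density_def by simp
    also have "\<dots> \<le> 1 / sqrt (2 * pi)" by (rule divide_right_mono) auto
    also have "\<dots> \<le> 1 / 2" by (rule divide_left_mono) (use s2 in auto)
    finally show ?thesis .
  qed
  have "{\<omega>\<in>space M. \<bar>c * eps i \<omega> + r\<bar> \<le> e} = eps i -` {a .. a + 2*e} \<inter> space M"
    using A by auto
  also have "emeasure M \<dots> = emeasure (distr M lborel (eps i)) {a .. a + 2*e}"
    by (subst emeasure_distr) auto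
  also have "\<dots> = (\<integral>\<^sup>+x. ennreal (std_normal_density x) * indicator {a .. a+2*e} x \<partial>lborel)"
    unfolding D by (subst emeasure_density) auto
  also have "\<dots> \<le> (\<integral>\<^sup>+x. ennreal (1/2) * indicator {a .. a+2*e} x \<partial>lborel)"
    by (intro nn_integral_mono mult_right_mono ennreal_leI dens_le) auto
  also have "\<dots> = ennreal (1/2) * emeasure lborel {a .. a+2*e}"
    by (rule nn_integral_cmult_indicator) simp
  also have "\<dots> = ennreal (1/2) * ennreal (2*e)"
    using e by simp
  also have "\<dots> = ennreal e"
    by (subst ennreal_mult[symmetric]) (use e in auto)
  finally show ?thesis .
qed

lemma core:
  fixes K :: "(nat + nat) set" and Fs :: "((nat + nat) \<Rightarrow> real) set"
  assumes iK: "Inr i \<notin> K"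
    and Fs[measurable]: "Fs \<in> sets (PiM K (\<lambda>_. borel))"
    and cm[measurable]: "c \<in> borel_measurable (PiM K (\<lambda>_. borel))"
    and Rm[measurable]: "R \<in> borel_measurable (PiM K (\<lambda>_. borel))"
    and c1: "\<And>w. w \<in> Fs \<Longrightarrow> c w = 1 \<or> c w = -1" and e: "0 \<le> e"
  shows "emeasure M {\<omega>\<in>space M. restrict (\<lambda>k. X k \<omega>) K \<in> Fs \<and>
            \<bar>c (restrict (\<lambda>k. X k \<omega>) K) * eps i \<omega> + R (restrict (\<lambda>k. X k \<omega>) K)\<bar> \<le> e}
         \<le> ennreal e * emeasure M {\<omega>\<in>space M. restrict (\<lambda>k. X k \<omega>) K \<in> Fs}"
proof -
  let ?PK = "PiM K (\<lambda>_. borel :: real measure)"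
  let ?W = "\<lambda>\<omega>. restrict (\<lambda>k. X k \<omega>) K"
  have ind0: "indep_var ?PK ?W (PiM {Inr i} (\<lambda>_. borel)) (\<lambda>\<omega>. restrict (\<lambda>k. X k \<omega>) {Inr i})"
    by (rule indep_var_restrict[OF indep]) (use iK in auto)
  let ?PV = "PiM {Inr i :: nat + nat} (\<lambda>_. borel :: real measure)"
  let ?V = "\<lambda>\<omega>. restrict (\<lambda>k. X k \<omega>) {Inr i :: nat + nat}"
  have Wm[measurable]: "?W \<in> measurable M ?PK"
    using X_meas by (intro measurable_restrict) auto
  have Vm[measurable]: "?V \<in> measurable M ?PV"
    using X_meas by (intro measurable_restrict) auto
  have joint: "distr M ?PK ?W \<Otimes>\<^sub>M distr M ?PV ?V = distr M (?PK \<Otimes>\<^sub>M ?PV) (\<lambda>\<omega>. (?W \<omega>, ?V \<omega>))"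
    using ind0 unfolding indep_var_distribution_eq by simp
  define T where "T = {p \<in> space (?PK \<Otimes>\<^sub>M ?PV). fst p \<in> Fs \<and> \<bar>c (fst p) * snd p (Inr i) + R (fst p)\<bar> \<le> e}"
  have Tm: "T \<in> sets (?PK \<Otimes>\<^sub>M ?PV)" unfolding T_def by measurable
  interpret DE: prob_space "distr M ?PV ?V" by (rule prob_space_distr) simp
  have Pm: "(\<lambda>\<omega>. (?W \<omega>, ?V \<omega>)) \<in> measurable M (?PK \<Otimes>\<^sub>M ?PV)"
    by (rule measurable_Pair[OF Wm Vm])
  have pre: "(\<lambda>\<omega>. (?W \<omega>, ?V \<omega>)) -` T \<inter> space M = {\<omega>\<in>space M. ?W \<omega> \<in> Fs \<and> \<bar>c (?W \<omega>) * eps i \<omega> + R (?W \<omega>)\<bar> \<le> e}"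
    using measurable_space[OF Wm] measurable_space[OF Vm] by (auto simp: T_def space_pair_measure XX_def)
  have "emeasure M {\<omega>\<in>space M. ?W \<omega> \<in> Fs \<and> \<bar>c (?W \<omega>) * eps i \<omega> + R (?W \<omega>)\<bar> \<le> e}
      = emeasure (distr M (?PK \<Otimes>\<^sub>M ?PV) (\<lambda>\<omega>. (?W \<omega>, ?V \<omega>))) T"
    using pre by (simp add: emeasure_distr[OF Pm Tm])
  also have "\<dots> = emeasure (distr M ?PK ?W \<Otimes>\<^sub>M distr M ?PV ?V) T"
    unfolding joint ..
  also have "\<dots> = (\<integral>\<^sup>+w. emeasure (distr M ?PV ?V) (Pair w -` T) \<partial>distr M ?PK ?W)"
    using Tm by (subst DE.emeasure_pair_measure_alt) auto
  also have "\<dots> \<le> (\<integral>\<^sup>+w. ennreal e * indicator Fs w \<partial>distr M ?PK ?W)"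
  proof (rule nn_integral_mono)
    fix w assume w: "w \<in> space (distr M ?PK ?W)"
    show "emeasure (distr M ?PV ?V) (Pair w -` T) \<le> ennreal e * indicator Fs w"
    proof (cases "w \<in> Fs")
      case True
      then have "Pair w -` T = {v \<in> space ?PV. \<bar>c w * v (Inr i) + R w\<bar> \<le> e}"
        using w by (auto simp: T_def space_pair_measure)
      moreover have "{v \<in> space ?PV. \<bar>c w * v (Inr i) + R w\<bar> \<le> e} \<in> sets ?PV" by measurable
      moreover have "?V -` {v \<in> space ?PV. \<bar>c w * v (Inr i) + R w\<bar> \<le> e} \<inter> space M
          = {\<omega>\<in>space M. \<bar>c w * eps i \<omega> + R w\<bar> \<le> e}"
        using measurable_space[OF Vm] by (auto simp: XX_def)
      ultimately show ?thesis using True normal_interval[OF c1[OF True] e, of i "R w"]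
        by (simp add: emeasure_distr)
    next
      case False
      then have "Pair w -` T = {}" by (auto simp: T_def)
      then show ?thesis by simp
    qed
  qed
  also have "\<dots> = ennreal e * emeasure (distr M ?PK ?W) Fs"
    by (rule nn_integral_cmult_indicator) simp
  also have "emeasure (distr M ?PK ?W) Fs = emeasure M {\<omega>\<in>space M. ?W \<omega> \<in> Fs}"
    by (subst emeasure_distr) (auto intro!: arg_cong[where f="emeasure M"])
  finally show ?thesis .
qed

end

lemma pred_le_PK[measurable]:
  fixes f g :: "_ \<Rightarrow> real"
  assumes "f \<in> borel_measurable (PiM K (\<lambda>_. (borel :: real measure)))" "g \<in> borel_measurable (PiM K (\<lambda>_. (borel :: real measure)))"
  shows "Measurable.pred (PiM K (\<lambda>_. (borel :: real measure))) (\<lambda>w. f w \<le> g w)"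
  unfolding pred_def by (rule borel_measurable_le) (rule assms)+

definition cc :: "nat \<Rightarrow> (nat \<Rightarrow> real) \<Rightarrow> nat \<Rightarrow> real" where
  "cc N x n = Psi1 N x 1 n - Psi1 N x 2 n"

definition DD :: "nat \<Rightarrow> (nat \<Rightarrow> real) \<Rightarrow> (nat \<Rightarrow> real) \<Rightarrow> real" where
  "DD N x y = (\<Sum>n<N. cc N x n * (fmean (x n) + y n))"

lemma tau_eq: "tau A = A 1 - A 2"
proof -
  have F: "(\<Sum>m\<in>{1,2::nat}. chi (Sstar m) * b * A m - kappa (chi (Sstar m) * b)) = b * (A 1 - A 2) / 2 - b^2/4" for b
    by (simp add: Sstar_def chi_def kappa_def power2_eq_square field_simps)
  have key: "b * (A 1 - A 2) / 2 - b^2/4 = (A 1 - A 2) * (A 1 - A 2) / 2 - (A 1 - A 2)^2/4 - (b - (A 1 - A 2))^2/4" for b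
    by (simp add: power2_eq_square field_simps)
  show ?thesis
    unfolding tau_def F
  proof (rule the_equality)
    show "\<forall>b'. b' * (A 1 - A 2) / 2 - b'^2/4 \<le> (A 1 - A 2) * (A 1 - A 2) / 2 - (A 1 - A 2)^2/4"
      using key by (metis diff_ge_0_iff_ge diff_le_eq le_add_same_cancel1 zero_le_divide_iff zero_le_numeral zero_le_power2)
  next
    fix b assume h: "\<forall>b'. b' * (A 1 - A 2) / 2 - b'^2/4 \<le> b * (A 1 - A 2) / 2 - b^2/4"
    then have "(A 1 - A 2) * (A 1 - A 2) / 2 - (A 1 - A 2)^2/4 \<le> b * (A 1 - A 2) / 2 - b^2/4" by blast
    then have "(b - (A 1 - A 2))^2/4 \<le> 0" using key[of b] by linarith
    then have "(b - (A 1 - A 2))^2 \<le> 0" by simp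
    then have "(b - (A 1 - A 2))^2 = 0" using zero_le_power2[of "b - (A 1 - A 2)"] by linarith
    then show "b = A 1 - A 2" by simp
  qed
qed

lemma tau_sample: "tau (Psi1_apply N x (\<lambda>n. fmean (x n) + y n)) = DD N x y"
  unfolding tau_eq Psi1_apply_def DD_def cc_def
  by (simp add: sum_subtractf[symmetric] left_diff_distrib)

lemma Psi1_cong: "(\<And>k. k < N \<Longrightarrow> x k = x' k) \<Longrightarrow> Psi1 N x m n = Psi1 N x' m n"
  unfolding Psi1_def by (cases "n < N") auto

lemma cc_cong: "(\<And>k. k < N \<Longrightarrow> x k = x' k) \<Longrightarrow> cc N x n = cc N x' n"
  unfolding cc_def using Psi1_cong[of N x x'] by metis

lemma Psi1_alt: "Psi1 N x m n = (if n < N \<and> (\<forall>k\<in>{..<N}. \<bar>x n - Sstar m\<bar> \<le> \<bar>x k - Sstar m\<bar>) then 1 else 0)"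
  unfolding Psi1_def dist_real_def by simp

lemma Psi1_01: "Psi1 N x m n = 0 \<or> Psi1 N x m n = 1"
  by (simp add: Psi1_def)

lemma cc_vals: "cc N x n \<noteq> 0 \<Longrightarrow> cc N x n = 1 \<or> cc N x n = -1"
  using Psi1_01[of N x 1 n] Psi1_01[of N x 2 n] unfolding cc_def by auto

lemma Z_lemma:
  assumes N: "N > 0" and Z: "\<forall>n<N. cc N x n = 0"
  shows "(\<forall>n<N. x n \<notin> {-1/2<..<0}) \<or> (\<forall>n<N. x n \<notin> {0<..<1/2})"
proof -
  define f where "f = (\<lambda>k. dist (x k) (Sstar 1))"
  have fin: "finite (f ` {..<N})" "f ` {..<N} \<noteq> {}" using N by auto
  obtain a where a: "a < N" "f a = Min (f ` {..<N})" using Min_in[OF fin] by auto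
  have amin: "\<forall>k<N. dist (x a) (Sstar 1) \<le> dist (x k) (Sstar 1)"
    using a Min_le[OF fin(1)] unfolding f_def by auto
  have "Psi1 N x 1 a = 1" unfolding Psi1_def using a(1) amin by simp
  moreover have "cc N x a = 0" using Z a(1) by simp
  ultimately have "Psi1 N x 2 a = 1" unfolding cc_def by simp
  then have amin2: "\<forall>k<N. dist (x a) (Sstar 2) \<le> dist (x k) (Sstar 2)"
    unfolding Psi1_def by (auto split: if_splits)
  show ?thesis
  proof (cases "x a \<ge> 0")
    case True
    have "\<forall>n<N. x n \<notin> {-1/2<..<0}"
    proof (intro allI impI)
      fix n assume "n < N"
      then have "\<bar>x a + 1/2\<bar> \<le> \<bar>x n + 1/2\<bar>" using amin2 by (auto simp: dist_real_def Sstar_def)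
      then show "x n \<notin> {-1/2<..<0}" using True by auto
    qed
    then show ?thesis ..
  next
    case False
    have "\<forall>n<N. x n \<notin> {0<..<1/2}"
    proof (intro allI impI)
      fix n assume "n < N"
      then have "\<bar>x a - 1/2\<bar> \<le> \<bar>x n - 1/2\<bar>" using amin by (auto simp: dist_real_def Sstar_def)
      then show "x n \<notin> {0<..<1/2}" using False by auto
    qed
    then show ?thesis ..
  qed
qed

lemma DD_decomp:
  assumes i: "i < N"
  shows "DD N x y = cc N x i * y i + (cc N x i * fmean (x i) + (\<Sum>n\<in>{..<N} - {i}. cc N x n * (fmean (x n) + y n)))"
proof -
  have "DD N x y = cc N x i * (fmean (x i) + y i) + (\<Sum>n\<in>{..<N} - {i}. cc N x n * (fmean (x n) + y n))"
    unfolding DD_def by (rule sum.remove) (use i in auto)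
  then show ?thesis by (simp add: algebra_simps)
qed

context exsetup begin

lemma cc_meas[measurable]: "(\<lambda>\<omega>. cc N (\<lambda>n. S n \<omega>) n) \<in> borel_measurable M"
  unfolding cc_def Psi1_alt by measurable

lemma DD_meas[measurable]: "(\<lambda>\<omega>. DD N (\<lambda>n. S n \<omega>) (\<lambda>n. eps n \<omega>)) \<in> borel_measurable M"
  unfolding DD_def cc_def Psi1_alt fmean_def by measurable

lemma cc_meas_PiM[measurable]: "(\<lambda>w. cc N (\<lambda>n. w (Inl n)) n) \<in> borel_measurable (PiM K (\<lambda>_. (borel :: real measure)))"
  unfolding cc_def Psi1_alt by measurable

lemma E_i_bound:
  assumes i: "i < N" and e: "0 \<le> e"
  shows "measure M {\<omega>\<in>space M. (\<forall>n<i. cc N (\<lambda>n. S n \<omega>) n = 0) \<and> cc N (\<lambda>n. S n \<omega>) i \<noteq> 0 \<and>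
             \<bar>DD N (\<lambda>n. S n \<omega>) (\<lambda>n. eps n \<omega>)\<bar> \<le> e}
     \<le> e * measure M {\<omega>\<in>space M. (\<forall>n<i. cc N (\<lambda>n. S n \<omega>) n = 0) \<and> cc N (\<lambda>n. S n \<omega>) i \<noteq> 0}"
proof -
  define K where "K = (Inl ` {..<N} \<union> Inr ` {..<N}) - {Inr i :: nat + nat}"
  let ?PK = "PiM K (\<lambda>_. (borel :: real measure))"
  let ?W = "\<lambda>\<omega>. restrict (\<lambda>k. X k \<omega>) K"
  define Fs where "Fs = {w \<in> space ?PK. (\<forall>n<i. cc N (\<lambda>n. w (Inl n)) n = 0) \<and> cc N (\<lambda>n. w (Inl n)) i \<noteq> 0}"
  define c where "c = (\<lambda>w :: nat + nat \<Rightarrow> real. cc N (\<lambda>n. w (Inl n)) i)"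
  define R where "R = (\<lambda>w :: nat + nat \<Rightarrow> real. cc N (\<lambda>n. w (Inl n)) i * fmean (w (Inl i)) +
      (\<Sum>n\<in>{..<N} - {i}. cc N (\<lambda>n. w (Inl n)) n * (fmean (w (Inl n)) + w (Inr n))))"
  have iK: "Inr i \<notin> K" by (simp add: K_def)
  have Fsm: "Fs \<in> sets ?PK" unfolding Fs_def by measurable
  have cm: "c \<in> borel_measurable ?PK" unfolding c_def by measurable
  have Rm: "R \<in> borel_measurable ?PK" unfolding R_def cc_def Psi1_alt fmean_def by measurable
  have c1: "\<And>w. w \<in> Fs \<Longrightarrow> c w = 1 \<or> c w = -1" unfolding Fs_def c_def using cc_vals by blast
  note co = core[OF iK Fsm cm Rm c1 e]
  have Wcoord: "?W \<omega> (Inl n) = S n \<omega>" if "n < N" for \<omega> n using that by (simp add: K_def XX_def)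
  have Wcoord2: "?W \<omega> (Inr n) = eps n \<omega>" if "n \<in> {..<N} - {i}" for \<omega> n using that by (auto simp: K_def XX_def)
  have ccW: "cc N (\<lambda>n. ?W \<omega> (Inl n)) n = cc N (\<lambda>n. S n \<omega>) n" for \<omega> n
    by (rule cc_cong, rule Wcoord)
  have Wsp: "?W \<omega> \<in> space ?PK" if "\<omega> \<in> space M" for \<omega>
    using that X_meas by (auto simp: space_PiM measurable_space)
  have set1: "{\<omega>\<in>space M. ?W \<omega> \<in> Fs} = {\<omega>\<in>space M. (\<forall>n<i. cc N (\<lambda>n. S n \<omega>) n = 0) \<and> cc N (\<lambda>n. S n \<omega>) i \<noteq> 0}"
  proof (intro Collect_cong)
    fix \<omega>
    show "(\<omega> \<in> space M \<and> ?W \<omega> \<in> Fs) = (\<omega> \<in> space M \<and> (\<forall>n<i. cc N (\<lambda>n. S n \<omega>) n = 0) \<and> cc N (\<lambda>n. S n \<omega>) i \<noteq> 0)"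
    proof (cases "\<omega> \<in> space M")
      case True
      have "?W \<omega> \<in> Fs \<longleftrightarrow> ?W \<omega> \<in> space ?PK \<and> (\<forall>n<i. cc N (\<lambda>n. S n \<omega>) n = 0) \<and> cc N (\<lambda>n. S n \<omega>) i \<noteq> 0"
        unfolding Fs_def by (simp only: mem_Collect_eq ccW)
      then show ?thesis using Wsp[OF True] True by blast
    qed simp
  qed
  have dd: "c (?W \<omega>) * eps i \<omega> + R (?W \<omega>) = DD N (\<lambda>n. S n \<omega>) (\<lambda>n. eps n \<omega>)" for \<omega>
  proof -
    have sumeq: "(\<Sum>n\<in>{..<N} - {i}. cc N (\<lambda>n. ?W \<omega> (Inl n)) n * (fmean (?W \<omega> (Inl n)) + ?W \<omega> (Inr n)))
        = (\<Sum>n\<in>{..<N} - {i}. cc N (\<lambda>n. S n \<omega>) n * (fmean (S n \<omega>) + eps n \<omega>))"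
    proof (rule sum.cong[OF refl])
      fix n assume n: "n \<in> {..<N} - {i}"
      then have nN: "n < N" by simp
      show "cc N (\<lambda>n. ?W \<omega> (Inl n)) n * (fmean (?W \<omega> (Inl n)) + ?W \<omega> (Inr n))
          = cc N (\<lambda>n. S n \<omega>) n * (fmean (S n \<omega>) + eps n \<omega>)"
        using ccW[of \<omega> n] Wcoord[OF nN, of \<omega>] Wcoord2[OF n, of \<omega>] by (simp only:)
    qed
    have cW: "c (?W \<omega>) = cc N (\<lambda>n. S n \<omega>) i" unfolding c_def by (rule ccW)
    have RW: "R (?W \<omega>) = cc N (\<lambda>n. S n \<omega>) i * fmean (S i \<omega>) +
        (\<Sum>n\<in>{..<N} - {i}. cc N (\<lambda>n. S n \<omega>) n * (fmean (S n \<omega>) + eps n \<omega>))"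
      unfolding R_def using ccW[of \<omega> i] Wcoord[OF i, of \<omega>] sumeq by (simp only:)
    show ?thesis
      unfolding cW RW DD_decomp[OF i, of "\<lambda>n. S n \<omega>" "\<lambda>n. eps n \<omega>"] by simp
  qed
  have set2: "{\<omega>\<in>space M. ?W \<omega> \<in> Fs \<and> \<bar>c (?W \<omega>) * eps i \<omega> + R (?W \<omega>)\<bar> \<le> e}
     = {\<omega>\<in>space M. (\<forall>n<i. cc N (\<lambda>n. S n \<omega>) n = 0) \<and> cc N (\<lambda>n. S n \<omega>) i \<noteq> 0 \<and>
             \<bar>DD N (\<lambda>n. S n \<omega>) (\<lambda>n. eps n \<omega>)\<bar> \<le> e}"
    apply (rule Collect_cong)
    subgoal for \<omega>
      using set1[unfolded set_eq_iff, rule_format, of \<omega>] unfolding mem_Collect_eq dd by blast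
    done
  have "ennreal (measure M {\<omega>\<in>space M. (\<forall>n<i. cc N (\<lambda>n. S n \<omega>) n = 0) \<and> cc N (\<lambda>n. S n \<omega>) i \<noteq> 0 \<and>
             \<bar>DD N (\<lambda>n. S n \<omega>) (\<lambda>n. eps n \<omega>)\<bar> \<le> e})
     \<le> ennreal e * ennreal (measure M {\<omega>\<in>space M. (\<forall>n<i. cc N (\<lambda>n. S n \<omega>) n = 0) \<and> cc N (\<lambda>n. S n \<omega>) i \<noteq> 0})"
    using co unfolding set1 set2 by (simp add: emeasure_eq_measure)
  also have "\<dots> = ennreal (e * measure M {\<omega>\<in>space M. (\<forall>n<i. cc N (\<lambda>n. S n \<omega>) n = 0) \<and> cc N (\<lambda>n. S n \<omega>) i \<noteq> 0})"
    by (rule ennreal_mult[symmetric]) (use e in auto)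
  finally show ?thesis
    by (subst (asm) ennreal_le_iff) (use e in auto)
qed

end

context exsetup begin

lemma prob_Z:
  assumes N: "N > 0"
  shows "prob {\<omega>\<in>space M. \<forall>n<N. cc N (\<lambda>n. S n \<omega>) n = 0} \<le> 2 * (5/7)^N"
proof -
  define B1 where "B1 = {-1/2<..<0::real}"
  define B2 where "B2 = {0<..<1/2::real}"
  have B1m: "B1 \<in> sets borel" and B2m: "B2 \<in> sets borel" by (simp_all add: B1_def B2_def)
  have m1: "measure lborel (B1 \<inter> loc_space) = 1/2"
  proof -
    have "B1 \<inter> loc_space = B1" by (auto simp: B1_def loc_space_def)
    then show ?thesis by (simp add: B1_def)
  qed
  have m2: "measure lborel (B2 \<inter> loc_space) = 1/2"
  proof -
    have "B2 \<inter> loc_space = B2" by (auto simp: B2_def loc_space_def)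
    then show ?thesis by (simp add: B2_def)
  qed
  have J: "finite {..<N}" "{..<N} \<noteq> {}" using N by auto
  have p1: "prob {\<omega>\<in>space M. \<forall>n\<in>{..<N}. S n \<omega> \<notin> B1} = (5/7)^N"
    using prob_all_notin[OF J B1m] m1 by simp
  have p2: "prob {\<omega>\<in>space M. \<forall>n\<in>{..<N}. S n \<omega> \<notin> B2} = (5/7)^N"
    using prob_all_notin[OF J B2m] m2 by simp
  have ev1: "{\<omega>\<in>space M. \<forall>n\<in>{..<N}. S n \<omega> \<notin> B1} \<in> events" using B1m by measurable
  have ev2: "{\<omega>\<in>space M. \<forall>n\<in>{..<N}. S n \<omega> \<notin> B2} \<in> events" using B2m by measurable
  have "prob {\<omega>\<in>space M. \<forall>n<N. cc N (\<lambda>n. S n \<omega>) n = 0}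
      \<le> prob ({\<omega>\<in>space M. \<forall>n\<in>{..<N}. S n \<omega> \<notin> B1} \<union> {\<omega>\<in>space M. \<forall>n\<in>{..<N}. S n \<omega> \<notin> B2})"
  proof (rule finite_measure_mono)
    show "{\<omega>\<in>space M. \<forall>n<N. cc N (\<lambda>n. S n \<omega>) n = 0}
      \<subseteq> {\<omega>\<in>space M. \<forall>n\<in>{..<N}. S n \<omega> \<notin> B1} \<union> {\<omega>\<in>space M. \<forall>n\<in>{..<N}. S n \<omega> \<notin> B2}"
      using Z_lemma[OF N] unfolding B1_def B2_def by auto
  qed (use ev1 ev2 in auto)
  also have "\<dots> \<le> prob {\<omega>\<in>space M. \<forall>n\<in>{..<N}. S n \<omega> \<notin> B1} + prob {\<omega>\<in>space M. \<forall>n\<in>{..<N}. S n \<omega> \<notin> B2}"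
    by (rule measure_Un_le[OF ev1 ev2])
  finally show ?thesis using p1 p2 by simp
qed

lemma tau_prob_lower:
  assumes N: "N > 0"
  shows "measure M {\<omega>\<in>space M. 1/4 < \<bar>tau (Psi1_apply N (\<lambda>n. S n \<omega>) (\<lambda>n. fmean (S n \<omega>) + eps n \<omega>)) - 0\<bar>}
     \<ge> 1 - 1/4 - 2 * (5/7)^N"
proof -
  define D where "D = (\<lambda>\<omega>. DD N (\<lambda>n. S n \<omega>) (\<lambda>n. eps n \<omega>))"
  have Dm[measurable]: "D \<in> borel_measurable M" unfolding D_def by (rule DD_meas)
  have set0: "{\<omega>\<in>space M. 1/4 < \<bar>tau (Psi1_apply N (\<lambda>n. S n \<omega>) (\<lambda>n. fmean (S n \<omega>) + eps n \<omega>)) - 0\<bar>}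
      = space M - {\<omega>\<in>space M. \<bar>D \<omega>\<bar> \<le> 1/4}"
    by (auto simp: tau_sample D_def)
  define Z where "Z = {\<omega>\<in>space M. \<forall>n<N. cc N (\<lambda>n. S n \<omega>) n = 0}"
  define F where "F = (\<lambda>i. {\<omega>\<in>space M. (\<forall>n<i. cc N (\<lambda>n. S n \<omega>) n = 0) \<and> cc N (\<lambda>n. S n \<omega>) i \<noteq> 0})"
  define E where "E = (\<lambda>i. {\<omega>\<in>space M. (\<forall>n<i. cc N (\<lambda>n. S n \<omega>) n = 0) \<and> cc N (\<lambda>n. S n \<omega>) i \<noteq> 0 \<and>
             \<bar>DD N (\<lambda>n. S n \<omega>) (\<lambda>n. eps n \<omega>)\<bar> \<le> 1/4})"
  have Zm: "Z \<in> events" unfolding Z_def by measurable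
  have Fm: "F i \<in> events" for i unfolding F_def by measurable
  have Em: "E i \<in> events" for i unfolding E_def by measurable
  have Bm: "{\<omega>\<in>space M. \<bar>D \<omega>\<bar> \<le> 1/4} \<in> events" by measurable
  have sub: "{\<omega>\<in>space M. \<bar>D \<omega>\<bar> \<le> 1/4} \<subseteq> Z \<union> (\<Union>i\<in>{..<N}. E i)"
  proof
    fix \<omega> assume w: "\<omega> \<in> {\<omega>\<in>space M. \<bar>D \<omega>\<bar> \<le> 1/4}"
    show "\<omega> \<in> Z \<union> (\<Union>i\<in>{..<N}. E i)"
    proof (cases "\<omega> \<in> Z")
      case False
      with w have ex: "\<exists>n. n < N \<and> cc N (\<lambda>n. S n \<omega>) n \<noteq> 0" by (auto simp: Z_def)
      define i where "i = (LEAST n. n < N \<and> cc N (\<lambda>n. S n \<omega>) n \<noteq> 0)"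
      have i: "i < N \<and> cc N (\<lambda>n. S n \<omega>) i \<noteq> 0" unfolding i_def using LeastI_ex[OF ex] .
      have lt: "\<forall>n<i. cc N (\<lambda>n. S n \<omega>) n = 0"
      proof (intro allI impI)
        fix n assume "n < i"
        then have "\<not> (n < N \<and> cc N (\<lambda>n. S n \<omega>) n \<noteq> 0)" unfolding i_def by (rule not_less_Least)
        then show "cc N (\<lambda>n. S n \<omega>) n = 0" using \<open>n < i\<close> i by auto
      qed
      have "\<omega> \<in> E i" using w i lt by (auto simp: E_def D_def)
      then show ?thesis using i by auto
    qed simp
  qed
  have disj: "disjoint_family_on F {..<N}"
    unfolding disjoint_family_on_def
  proof (intro ballI impI)
    fix i j assume "i \<in> {..<N}" "j \<in> {..<N}" "i \<noteq> j"
    then show "F i \<inter> F j = {}"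
      by (cases "i < j") (auto simp: F_def)
  qed
  have "prob {\<omega>\<in>space M. \<bar>D \<omega>\<bar> \<le> 1/4} \<le> prob (Z \<union> (\<Union>i\<in>{..<N}. E i))"
    by (rule finite_measure_mono[OF sub]) (use Zm Em in auto)
  also have "\<dots> \<le> prob Z + prob (\<Union>i\<in>{..<N}. E i)"
    by (rule measure_Un_le) (use Zm Em in auto)
  also have "prob (\<Union>i\<in>{..<N}. E i) \<le> (\<Sum>i<N. prob (E i))"
    by (rule finite_measure_subadditive_finite) (use Em in auto)
  also have "(\<Sum>i<N. prob (E i)) \<le> (\<Sum>i<N. 1/4 * prob (F i))"
  proof (rule sum_mono)
    fix i assume "i \<in> {..<N}"
    then have "i < N" by simp
    show "prob (E i) \<le> 1/4 * prob (F i)"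
      unfolding E_def F_def by (rule E_i_bound[OF \<open>i < N\<close>]) simp
  qed
  also have "(\<Sum>i<N. 1/4 * prob (F i)) = 1/4 * prob (\<Union>i\<in>{..<N}. F i)"
    by (subst finite_measure_finite_Union) (use Fm disj in \<open>auto simp: sum_distrib_left\<close>)
  also have "1/4 * prob (\<Union>i\<in>{..<N}. F i) \<le> 1/4 * 1"
    by (intro mult_left_mono) auto
  finally have "prob {\<omega>\<in>space M. \<bar>D \<omega>\<bar> \<le> 1/4} \<le> prob Z + 1/4" by simp
  moreover have "prob Z \<le> 2 * (5/7)^N" unfolding Z_def by (rule prob_Z[OF N])
  moreover have "prob (space M - {\<omega>\<in>space M. \<bar>D \<omega>\<bar> \<le> 1/4}) = 1 - prob {\<omega>\<in>space M. \<bar>D \<omega>\<bar> \<le> 1/4}"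
    by (rule prob_compl[OF Bm])
  ultimately show ?thesis unfolding set0 by linarith
qed

lemma tau_part:
  "\<not> conv_in_prob M (\<lambda>N \<omega>. tau (Psi1_apply N (\<lambda>n. S n \<omega>) (\<lambda>n. fmean (S n \<omega>) + eps n \<omega>))) 0"
proof
  assume H: "conv_in_prob M (\<lambda>N \<omega>. tau (Psi1_apply N (\<lambda>n. S n \<omega>) (\<lambda>n. fmean (S n \<omega>) + eps n \<omega>))) 0"
  have pos: "(1/4::real) > 0" by simp
  have lim: "(\<lambda>N. measure M {\<omega>\<in>space M. 1/4 < \<bar>tau (Psi1_apply N (\<lambda>n. S n \<omega>) (\<lambda>n. fmean (S n \<omega>) + eps n \<omega>)) - 0\<bar>}) \<longlonglongrightarrow> 0"
    using H[unfolded conv_in_prob_def, rule_format, OF pos] .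
  have p57: "norm (5/7::real) < 1" by simp
  have lim2: "(\<lambda>N. 1 - 1/4 - 2 * (5/7::real)^N) \<longlonglongrightarrow> 1 - 1/4 - 2 * 0"
    by (rule tendsto_diff[OF tendsto_const tendsto_mult[OF tendsto_const LIMSEQ_power_zero[OF p57]]])
  have "1 - 1/4 - 2 * 0 \<le> (0::real)"
  proof (rule LIMSEQ_le[OF lim2 lim])
    show "\<exists>N0. \<forall>N\<ge>N0. 1 - 1/4 - 2 * (5/7::real)^N \<le>
      measure M {\<omega>\<in>space M. 1/4 < \<bar>tau (Psi1_apply N (\<lambda>n. S n \<omega>) (\<lambda>n. fmean (S n \<omega>) + eps n \<omega>)) - 0\<bar>}"
    proof (intro exI allI impI)
      fix N :: nat assume "N \<ge> 1"
      then have "N > 0" by simp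
      then show "1 - 1/4 - 2 * (5/7::real)^N \<le>
        measure M {\<omega>\<in>space M. 1/4 < \<bar>tau (Psi1_apply N (\<lambda>n. S n \<omega>) (\<lambda>n. fmean (S n \<omega>) + eps n \<omega>)) - 0\<bar>}"
        by (rule tau_prob_lower)
    qed
  qed
  then show False by simp
qed

end

theorem mainTheorem4:
  fixes M :: "'a measure" and S eps :: "nat \<Rightarrow> 'a \<Rightarrow> real"
  assumes "prob_space M"
    and S_distr: "\<And>n. distributed M lborel (S n)
                    (\<lambda>x. indicator loc_space x / measure lborel loc_space)"
    and eps_distr: "\<And>n. distributed M lborel (eps n) std_normal_density"
    and indep: "prob_space.indep_vars M (\<lambda>_. borel)
                  (\<lambda>i. case i of Inl n \<Rightarrow> S n | Inr n \<Rightarrow> eps n) UNIV"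
  shows "(\<forall>s\<in>loc_space. var_fun s = 1) \<and> (\<forall>s\<in>loc_space. fourth_fun s = 3)
      \<and> strictly_concave_on UNIV target_obj
      \<and> (\<forall>b. target_obj b \<le> target_obj 0)
      \<and> (\<forall>b. (\<forall>b'. target_obj b' \<le> target_obj b) \<longrightarrow> b = 0)
      \<and> (AE \<omega> in M. infill (\<lambda>n. S n \<omega>) {Sstar 1, Sstar 2})
      \<and> \<not> conv_in_prob M (\<lambda>N \<omega>. ols N (\<lambda>n. S n \<omega>) (\<lambda>n. fmean (S n \<omega>) + eps n \<omega>)) 0
      \<and> \<not> conv_in_prob M (\<lambda>N \<omega>. tau (Psi1_apply N (\<lambda>n. S n \<omega>)
                                   (\<lambda>n. fmean (S n \<omega>) + eps n \<omega>))) 0"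
proof -
  interpret exsetup M S eps
    by (rule exsetup.intro[OF assms(1)], unfold_locales) (use S_distr eps_distr indep in auto)
  have t1: "\<forall>b. target_obj b \<le> target_obj 0"
    unfolding target_obj_eq by simp
  have t2: "\<forall>b. (\<forall>b'. target_obj b' \<le> target_obj b) \<longrightarrow> b = 0"
  proof (intro allI impI)
    fix b assume "\<forall>b'. target_obj b' \<le> target_obj b"
    then have "target_obj 0 \<le> target_obj b" by blast
    then have "b^2 \<le> 0" unfolding target_obj_eq by simp
    then show "b = 0" using zero_le_power2[of b] by simp
  qed
  show ?thesis
    using var_fun_eq fourth_fun_eq concave_part t1 t2 infill_part ols_part tau_part by blast
qed

end
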